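(* Let $K$ be a field of characteristic $0$, let $L=\mathcal{L}(x,y)$ be the free Lie algebra over $K$ freely generated by $x,y$, let $\delta$ be the derivation of $L$ with $\delta(x)=0$, $\delta(y)=x$, and $L^\delta=\ker\delta$. Let $f\neq 0$ be a multihomogeneous element of $L$ with $\deg_y(f)=3$ and $\deg(f)=n$. Then $f\in L^\delta$ if and only if $f$ belongs to the Lie subalgebra of $L$ generated by $x$, $[y,x]$ and the elements $$[y, \underbrace{x, \ldots, x}_k, [y, \underbrace{x, \ldots, x}_{n-3-k}, y]] - [y,\underbrace{x, \ldots, x}_{k-1}, y, [y, \underbrace{x, \ldots, x}_{n-2-k}]]$$ for integers $k$ with $\frac{n-2}{2}\leq k\leq n-4$.
   Context: Brackets are left-normed: $[a_1,a_2,\ldots,a_n]=[[\ldots[a_1,a_2],\ldots],a_n]$, and an inner bracket denotes a left-normed element inserted as a single argument. *)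

theory Defs
  imports Main
begin

datatype gen = X | Y

text \<open>Elements of the (completed) free associative algebra K<<x,y>>: coefficient
  functions on words. The free Lie algebra L(x,y) is realised (Witt) as the Lie
  subalgebra generated by x and y under the commutator bracket.\<close>
type_synonym 'k ncs = "gen list \<Rightarrow> 'k"

definition ncmul :: "'k::comm_ring_1 ncs \<Rightarrow> 'k ncs \<Rightarrow> 'k ncs" where
  "ncmul p q = (\<lambda>w. \<Sum>i\<le>length w. p (take i w) * q (drop i w))"

definition lie_br :: "'k::comm_ring_1 ncs \<Rightarrow> 'k ncs \<Rightarrow> 'k ncs" where
  "lie_br a b = (\<lambda>w. ncmul a b w - ncmul b a w)"

definition gen_el :: "gen \<Rightarrow> 'k::comm_ring_1 ncs" where
  "gen_el g = (\<lambda>w. if w = [g] then 1 else 0)"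

abbreviation xel :: "'k::comm_ring_1 ncs" where "xel \<equiv> gen_el X"
abbreviation yel :: "'k::comm_ring_1 ncs" where "yel \<equiv> gen_el Y"

inductive lie_gen :: "'k::comm_ring_1 ncs set \<Rightarrow> 'k ncs \<Rightarrow> bool" for S where
  base: "s \<in> S \<Longrightarrow> lie_gen S s"
| zero: "lie_gen S (\<lambda>w. 0)"
| add: "lie_gen S a \<Longrightarrow> lie_gen S b \<Longrightarrow> lie_gen S (\<lambda>w. a w + b w)"
| smult: "lie_gen S a \<Longrightarrow> lie_gen S (\<lambda>w. c * a w)"
| br: "lie_gen S a \<Longrightarrow> lie_gen S b \<Longrightarrow> lie_gen S (lie_br a b)"

definition free_lie :: "'k::comm_ring_1 ncs set" where
  "free_lie = {f. lie_gen {xel, yel} f}"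

text \<open>The derivation with x \<mapsto> 0, y \<mapsto> x, extended to the associative algebra:
  coefficient of w in delta p is the sum of coefficients of p at the words obtained
  from w by turning one letter X into Y.\<close>
definition delta :: "'k::comm_ring_1 ncs \<Rightarrow> 'k ncs" where
  "delta p = (\<lambda>w. \<Sum>i\<in>{i. i < length w \<and> w ! i = X}. p (w[i := Y]))"

definition cnt :: "gen \<Rightarrow> gen list \<Rightarrow> nat" where
  "cnt g w = length (filter (\<lambda>c. c = g) w)"

definition multihom :: "'k::zero ncs \<Rightarrow> bool" where
  "multihom f \<longleftrightarrow> (\<exists>a b. \<forall>w. f w \<noteq> 0 \<longrightarrow> cnt X w = a \<and> cnt Y w = b)"

definition deg_y_is :: "'k::zero ncs \<Rightarrow> nat \<Rightarrow> bool" where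
  "deg_y_is f d \<longleftrightarrow> (\<forall>w. f w \<noteq> 0 \<longrightarrow> cnt Y w = d)"

definition deg_is :: "'k::zero ncs \<Rightarrow> nat \<Rightarrow> bool" where
  "deg_is f d \<longleftrightarrow> (\<forall>w. f w \<noteq> 0 \<longrightarrow> length w = d)"

definition lnb :: "'k::comm_ring_1 ncs \<Rightarrow> 'k ncs list \<Rightarrow> 'k ncs" where
  "lnb a bs = foldl lie_br a bs"

definition wel :: "nat \<Rightarrow> nat \<Rightarrow> 'k::comm_ring_1 ncs" where
  "wel n k = (\<lambda>w.
     lnb yel (replicate k xel @ [lnb yel (replicate (n-3-k) xel @ [yel])]) w
   - lnb yel (replicate (k-1) xel @ [yel, lnb yel (replicate (n-2-k) xel)]) w)"

definition gens_cor :: "nat \<Rightarrow> 'k::comm_ring_1 ncs set" where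
  "gens_cor n = {xel, lie_br yel xel} \<union>
     {wel n k | k. int n - 2 \<le> 2 * int k \<and> k + 4 \<le> n}"

end

theory Submission
  imports Defs "HOL-Library.Function_Algebras"
begin



definition sc :: "'k::comm_ring_1 \<Rightarrow> 'k ncs \<Rightarrow> 'k ncs" where
  "sc c a = (\<lambda>w. c * a w)"

lemma sc_apply[simp]: "sc c a w = c * a w" by (simp add: sc_def)

lemma ncmul_Nil[simp]: "ncmul p q [] = p [] * q []"
  by (simp add: ncmul_def)

lemma ncmul_Cons: "ncmul p q (a#w) = p [] * q (a#w) + ncmul (\<lambda>u. p (a#u)) q w"
  unfolding ncmul_def length_Cons sum.atMost_Suc_shift by simp

lemma ncmul_add1[simp]: "ncmul (a + b) c = ncmul a c + ncmul b c"
  by (simp add: ncmul_def fun_eq_iff sum.distrib algebra_simps)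
lemma ncmul_add2[simp]: "ncmul a (b + c) = ncmul a b + ncmul a c"
  by (simp add: ncmul_def fun_eq_iff sum.distrib algebra_simps)
lemma ncmul_sc1[simp]: "ncmul (sc c a) b = sc c (ncmul a b)"
  by (simp add: ncmul_def fun_eq_iff sum_distrib_left algebra_simps)
lemma ncmul_sc2[simp]: "ncmul a (sc c b) = sc c (ncmul a b)"
  by (simp add: ncmul_def fun_eq_iff sum_distrib_left algebra_simps)
lemma ncmul_minus1[simp]: "ncmul (- a) b = - ncmul a b"
  by (simp add: ncmul_def fun_eq_iff sum_negf)
lemma ncmul_minus2[simp]: "ncmul a (- b) = - ncmul a b"
  by (simp add: ncmul_def fun_eq_iff sum_negf)
lemma ncmul_diff1[simp]: "ncmul (a - b) c = ncmul a c - ncmul b c"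
  by (simp add: ncmul_def fun_eq_iff sum_subtractf algebra_simps)
lemma ncmul_diff2[simp]: "ncmul a (b - c) = ncmul a b - ncmul a c"
  by (simp add: ncmul_def fun_eq_iff sum_subtractf algebra_simps)
lemma ncmul_zero1[simp]: "ncmul 0 b = 0"
  by (simp add: ncmul_def fun_eq_iff)
lemma ncmul_zero2[simp]: "ncmul a 0 = 0"
  by (simp add: ncmul_def fun_eq_iff)

lemma ncmul_assoc_pt: "ncmul (ncmul p q) r w = ncmul p (ncmul q r) w"
proof (induction w arbitrary: p)
  case Nil
  then show ?case by simp
next
  case (Cons a w)
  have D: "(\<lambda>u. ncmul p q (a#u)) = sc (p []) (\<lambda>u. q (a#u)) + ncmul (\<lambda>u. p (a#u)) q"
    by (simp add: fun_eq_iff ncmul_Cons)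
  have L1: "ncmul (ncmul p q) r (a#w) = ncmul p q [] * r (a#w) + ncmul (\<lambda>u. ncmul p q (a#u)) r w"
    by (rule ncmul_Cons)
  have L2: "ncmul (\<lambda>u. ncmul p q (a#u)) r w = p [] * ncmul (\<lambda>u. q (a#u)) r w + ncmul (ncmul (\<lambda>u. p (a#u)) q) r w"
    by (subst D) simp
  have R1: "ncmul p (ncmul q r) (a#w) = p [] * ncmul q r (a#w) + ncmul (\<lambda>u. p(a#u)) (ncmul q r) w"
    by (rule ncmul_Cons)
  have R2: "ncmul q r (a#w) = q [] * r (a#w) + ncmul (\<lambda>u. q (a#u)) r w"
    by (rule ncmul_Cons)
  show ?case
    by (simp only: L1 L2 R1 R2 Cons.IH ncmul_Nil) (simp add: algebra_simps)
qed

lemma ncmul_assoc: "ncmul (ncmul p q) r = ncmul p (ncmul q r)"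
  using ncmul_assoc_pt by blast

lemma lie_br_eq: "lie_br a b = ncmul a b - ncmul b a"
  by (simp add: lie_br_def fun_eq_iff)

lemma lie_add1[simp]: "lie_br (a + b) c = lie_br a c + lie_br b c"
  by (simp add: lie_br_eq)
lemma lie_add2[simp]: "lie_br a (b + c) = lie_br a b + lie_br a c"
  by (simp add: lie_br_eq)
lemma lie_sc1[simp]: "lie_br (sc c a) b = sc c (lie_br a b)"
  by (simp add: lie_br_eq fun_eq_iff algebra_simps)
lemma lie_sc2[simp]: "lie_br a (sc c b) = sc c (lie_br a b)"
  by (simp add: lie_br_eq fun_eq_iff algebra_simps)
lemma lie_minus1[simp]: "lie_br (- a) b = - lie_br a b"
  by (simp add: lie_br_eq)
lemma lie_minus2[simp]: "lie_br a (- b) = - lie_br a b"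
  by (simp add: lie_br_eq)
lemma lie_diff1[simp]: "lie_br (a - b) c = lie_br a c - lie_br b c"
  by (simp add: lie_br_eq)
lemma lie_diff2[simp]: "lie_br a (b - c) = lie_br a b - lie_br a c"
  by (simp add: lie_br_eq)
lemma lie_zero1[simp]: "lie_br 0 b = 0"
  by (simp add: lie_br_eq)
lemma lie_zero2[simp]: "lie_br a 0 = 0"
  by (simp add: lie_br_eq)
lemma lie_self[simp]: "lie_br a a = 0"
  by (simp add: lie_br_eq)
lemma lie_anti: "lie_br a b = - lie_br b a"
  by (simp add: lie_br_eq)
lemma jacobi: "lie_br (lie_br a b) c = lie_br (lie_br a c) b + lie_br a (lie_br b c)"
  by (simp add: lie_br_eq ncmul_assoc algebra_simps)

lemma delta_Nil[simp]: "delta p [] = 0"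
  by (simp add: delta_def)

lemma delta_Cons: "delta p (a#w) = (if a = X then p (Y#w) else 0) + delta (\<lambda>u. p (a#u)) w"
proof -
  have S: "{i. i < length (a#w) \<and> (a#w) ! i = X} =
     (if a = X then {0} else {}) \<union> Suc ` {i. i < length w \<and> w ! i = X}"
    by (rule set_eqI, case_tac x) (auto simp: inj_image_mem_iff)
  show ?thesis
    unfolding delta_def S
    by (subst sum.union_disjoint) (auto simp: sum.reindex)
qed

lemma delta_add[simp]: "delta (a + b) = delta a + delta b"
  by (simp add: delta_def fun_eq_iff sum.distrib)
lemma delta_sc[simp]: "delta (sc c a) = sc c (delta a)"
  by (simp add: delta_def fun_eq_iff sum_distrib_left)
lemma delta_minus[simp]: "delta (- a) = - delta a"
  by (simp add: delta_def fun_eq_iff sum_negf)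
lemma delta_diff[simp]: "delta (a - b) = delta a - delta b"
  by (simp add: delta_def fun_eq_iff sum_subtractf)
lemma delta_zero[simp]: "delta 0 = 0"
  by (simp add: delta_def fun_eq_iff)

lemma delta_ncmul_pt: "delta (ncmul p q) w = ncmul (delta p) q w + ncmul p (delta q) w"
proof (induction w arbitrary: p)
  case Nil
  then show ?case by simp
next
  case (Cons a w)
  have D: "(\<lambda>u. ncmul p q (a#u)) = sc (p []) (\<lambda>u. q (a#u)) + ncmul (\<lambda>u. p (a#u)) q"
    by (simp add: fun_eq_iff ncmul_Cons)
  have E: "(\<lambda>u. delta p (a#u)) = (if a = X then (\<lambda>u. p (Y#u)) else 0) + delta (\<lambda>u. p (a#u))"
    by (simp add: fun_eq_iff delta_Cons)
  have "delta (ncmul p q) (a#w) = (if a = X then ncmul p q (Y#w) else 0) + delta (\<lambda>u. ncmul p q (a#u)) w"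
    by (rule delta_Cons)
  moreover have "delta (\<lambda>u. ncmul p q (a#u)) w = p [] * delta (\<lambda>u. q (a#u)) w + delta (ncmul (\<lambda>u. p (a#u)) q) w"
    unfolding D by simp
  moreover have "delta (ncmul (\<lambda>u. p (a#u)) q) w = ncmul (delta (\<lambda>u. p (a#u))) q w + ncmul (\<lambda>u. p (a#u)) (delta q) w"
    by (rule Cons.IH)
  moreover have "ncmul (delta p) q (a#w) = (if a = X then ncmul (\<lambda>u. p (Y#u)) q w else 0) + ncmul (delta (\<lambda>u. p (a#u))) q w"
    by (subst ncmul_Cons, subst E) simp
  moreover have "ncmul p (delta q) (a#w) = p [] * ((if a = X then q (Y#w) else 0) + delta (\<lambda>u. q (a#u)) w) + ncmul (\<lambda>u. p (a#u)) (delta q) w"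
    by (simp add: ncmul_Cons delta_Cons)
  ultimately show ?case
    by (cases a) (simp_all add: ncmul_Cons algebra_simps)
qed

lemma delta_ncmul: "delta (ncmul p q) = ncmul (delta p) q + ncmul p (delta q)"
  by (rule ext) (simp add: delta_ncmul_pt)

lemma delta_lie: "delta (lie_br a b) = lie_br (delta a) b + lie_br a (delta b)"
  by (simp add: lie_br_eq delta_ncmul)



lemma cnt_Nil[simp]: "cnt g [] = 0" by (simp add: cnt_def)
lemma cnt_Cons[simp]: "cnt g (a#w) = (if a = g then Suc (cnt g w) else cnt g w)" by (simp add: cnt_def)
lemma cnt_append[simp]: "cnt g (u@v) = cnt g u + cnt g v" by (simp add: cnt_def)
lemma cnt_replicate[simp]: "cnt g (replicate n a) = (if a = g then n else 0)" by (induct n) auto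
lemma length_cnt: "length w = cnt X w + cnt Y w"
  by (induct w) (auto, metis gen.exhaust)

definition hom :: "'k::zero ncs \<Rightarrow> nat \<Rightarrow> nat \<Rightarrow> bool" where
  "hom p a b \<longleftrightarrow> (\<forall>w. p w \<noteq> 0 \<longrightarrow> cnt X w = a \<and> cnt Y w = b)"

lemma hom_D: "hom p a b \<Longrightarrow> p w \<noteq> 0 \<Longrightarrow> cnt X w = a \<and> cnt Y w = b"
  by (simp add: hom_def)
lemma hom_len: "hom p a b \<Longrightarrow> p w \<noteq> 0 \<Longrightarrow> length w = a + b"
  by (simp add: hom_def length_cnt)

lemma hom_ncmul: assumes "hom p a b" "hom q c d" shows "hom (ncmul p q) (a+c) (b+d)"
  unfolding hom_def
proof (intro allI impI)
  fix w assume "ncmul p q w \<noteq> 0"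
  then obtain i where "p (take i w) * q (drop i w) \<noteq> 0"
    unfolding ncmul_def by (meson sum.not_neutral_contains_not_neutral)
  then have "p (take i w) \<noteq> 0" "q (drop i w) \<noteq> 0" by auto
  with assms have "cnt X (take i w @ drop i w) = a + c \<and> cnt Y (take i w @ drop i w) = b + d"
    by (auto dest: hom_D simp del: append_take_drop_id)
  then show "cnt X w = a + c \<and> cnt Y w = b + d" by simp
qed

lemma hom_pt: "(\<And>w. (r::'k::comm_ring_1 ncs) w \<noteq> 0 \<Longrightarrow> p w \<noteq> 0 \<or> q w \<noteq> 0) \<Longrightarrow> hom p a b \<Longrightarrow> hom q a b \<Longrightarrow> hom r a b"
  unfolding hom_def by blast
lemma hom_add: "hom (p::'k::comm_ring_1 ncs) a b \<Longrightarrow> hom q a b \<Longrightarrow> hom (p + q) a b"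
  by (rule hom_pt[of _ p q]) auto
lemma hom_diff: "hom (p::'k::comm_ring_1 ncs) a b \<Longrightarrow> hom q a b \<Longrightarrow> hom (p - q) a b"
  by (rule hom_pt[of _ p q]) auto
lemma hom_minus: "hom (p::'k::comm_ring_1 ncs) a b \<Longrightarrow> hom (- p) a b"
  by (rule hom_pt[of _ p p]) auto
lemma hom_sc: "hom p a b \<Longrightarrow> hom (sc c p) a b"
  by (rule hom_pt[of _ p p]) auto
lemma hom_zero: "hom 0 a b"
  by (auto simp: hom_def)
lemma hom_lie: assumes "hom p a b" "hom q c d" shows "hom (lie_br p q) (a+c) (b+d)"
proof -
  have 1: "hom (ncmul p q) (a+c) (b+d)" using hom_ncmul[OF assms] .
  have 2: "hom (ncmul q p) (a+c) (b+d)" using hom_ncmul[OF assms(2,1)] by (simp add: add.commute)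
  show ?thesis unfolding lie_br_eq by (rule hom_diff[OF 1 2])
qed
lemma hom_x: "hom xel 1 0" by (simp add: hom_def gen_el_def)
lemma hom_y: "hom yel 0 1" by (simp add: hom_def gen_el_def)

lemma ncmul_hom_split:
  assumes "hom p a b"
  shows "ncmul p q w = (if a + b \<le> length w then p (take (a+b) w) * q (drop (a+b) w) else 0)"
proof -
  have "ncmul p q w = (\<Sum>i\<le>length w. if i = a + b then p (take i w) * q (drop i w) else 0)"
    unfolding ncmul_def
  proof (rule sum.cong[OF refl])
    fix i assume "i \<in> {..length w}"
    then have L: "length (take i w) = i" by simp
    have H: "p (take i w) \<noteq> 0 \<Longrightarrow> i = a + b"
      using hom_len[OF assms, of "take i w"] unfolding L .
    show "p (take i w) * q (drop i w) = (if i = a + b then p (take i w) * q (drop i w) else 0)"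
    proof (cases "i = a + b")
      case False
      then have "p (take i w) = 0" using H by blast
      then show ?thesis using False by simp
    qed simp
  qed
  also have "\<dots> = (if a + b \<in> {..length w} then p (take (a+b) w) * q (drop (a+b) w) else 0)"
    by (rule sum.delta) simp
  finally show ?thesis by simp
qed

definition ys :: "nat \<Rightarrow> 'k::comm_ring_1 ncs" where
  "ys i = lnb yel (replicate i xel)"

lemma lnb_snoc: "lnb a (bs @ [b]) = lie_br (lnb a bs) b"
  by (simp add: lnb_def)
lemma lnb_append: "lnb a (bs @ cs) = lnb (lnb a bs) cs"
  by (simp add: lnb_def)
lemma lnb_Nil[simp]: "lnb a [] = a" by (simp add: lnb_def)

lemma ys_0: "ys 0 = yel" by (simp add: ys_def)
lemma ys_Suc: "ys (Suc i) = lie_br (ys i) xel"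
  unfolding ys_def replicate_Suc replicate_append_same[symmetric] lnb_snoc ..

lemma hom_ys: "hom (ys i :: 'k::comm_ring_1 ncs) i 1"
proof (induct i)
  case 0 show ?case unfolding ys_0 by (rule hom_y)
next
  case (Suc i)
  have "hom (lie_br (ys i :: 'k ncs) xel) (i + 1) (1 + 0)" using hom_lie[OF Suc.hyps hom_x] .
  then show ?case by (simp add: ys_Suc)
qed

lemma ys_top: "ys c (Y # replicate c X) = 1"
proof (induct c)
  case 0 then show ?case by (simp add: ys_0 gen_el_def)
next
  case (Suc c)
  have w: "Y # replicate (Suc c) X = (Y # replicate c X) @ [X]"
    by (simp add: replicate_append_same)
  have h: "hom (ys c) c 1" by (rule hom_ys)
  have xY: "xel [Y] = 0" "xel [X] = 1" by (simp_all add: gen_el_def)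
  have x1: "(1::nat) + 0 = 1" by simp
  show ?case
    unfolding ys_Suc lie_br_eq w
    by (simp add: ncmul_hom_split[OF h] ncmul_hom_split[OF hom_x] Suc xY x1)
qed

lemma ys_val: "ys d (Y # replicate b X) = (if b = d then 1 else 0)"
  using hom_D[OF hom_ys, of d "Y # replicate b X"] by (auto simp: ys_top)

lemma ys_pref0: "a < c \<Longrightarrow> ncmul (ys c) q (Y # replicate a X @ Y # v) = 0"
proof -
  assume "a < c"
  then obtain d where c: "c = a + Suc d" by (metis add_Suc_right less_iff_Suc_add add.commute)
  have Z: "ys c (take (c + 1) (Y # replicate a X @ Y # v)) = 0"
  proof (rule ccontr)
    assume "ys c (take (c + 1) (Y # replicate a X @ Y # v)) \<noteq> 0"
    from hom_D[OF hom_ys this] show False by (simp add: c)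
  qed
  have "ncmul (ys c) q (Y # replicate a X @ Y # v) = (if c + 1 \<le> length (Y # replicate a X @ Y # v)
     then ys c (take (c + 1) (Y # replicate a X @ Y # v)) * q (drop (c + 1) (Y # replicate a X @ Y # v)) else 0)"
    by (rule ncmul_hom_split[OF hom_ys])
  also have "\<dots> = 0" by (simp only: Z mult_zero_left if_cancel)
  finally show ?thesis .
qed

lemma ys_pref1: "ncmul (ys a) q (Y # replicate a X @ v) = q v"
  by (simp add: ncmul_hom_split[OF hom_ys] ys_top)

lemma delta_x: "delta xel = 0"
proof (rule ext)
  fix w :: "gen list"
  have "\<And>i. i < length w \<Longrightarrow> w[i:=Y] \<noteq> [X]"
  proof
    fix i assume i: "i < length w" and h: "w[i:=Y] = [X]"
    have "length w = 1" using arg_cong[OF h, of length] by simp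
    with i have "i = 0" by simp
    have "w[i:=Y] ! i = Y" using i by simp
    then show False using h \<open>i = 0\<close> by simp
  qed
  then show "delta xel w = 0 w"
    unfolding delta_def by (auto simp: gen_el_def intro!: sum.neutral)
qed

lemma delta_y: "delta yel = xel"
proof (rule ext)
  fix w :: "gen list"
  show "delta yel w = xel w"
  proof (cases "w = [X]")
    case True
    have "{i. i < length w \<and> w ! i = X} = {0}" using True by auto
    then show ?thesis using True by (simp add: delta_def gen_el_def)
  next
    case False
    have "\<And>i. i < length w \<Longrightarrow> w ! i = X \<Longrightarrow> w[i:=Y] \<noteq> [Y]"
    proof
      fix i assume "i < length w" "w ! i = X" "w[i:=Y] = [Y]"
      then have "length w = 1" by (metis length_list_update list.size(3,4) One_nat_def add_0)
      with \<open>i < length w\<close> have "i = 0" by simp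
      with \<open>length w = 1\<close> \<open>w ! i = X\<close> have "w = [X]"
        by (metis One_nat_def length_0_conv length_Suc_conv nth_Cons_0)
      with False show False by simp
    qed
    then show ?thesis using False unfolding delta_def by (auto simp: gen_el_def intro!: sum.neutral)
  qed
qed

lemma delta_ys: "delta (ys (Suc i)) = 0"
proof (induct i)
  case 0
  show ?case by (simp only: ys_Suc ys_0 delta_lie delta_x delta_y lie_self lie_zero2 add_0)
next
  case (Suc i)
  show ?case
    by (simp only: ys_Suc[of "Suc i"] delta_lie delta_x Suc lie_zero1 lie_zero2 add_0)
qed



lemma sc_one[simp]: "sc 1 a = a" by (simp add: fun_eq_iff)
lemma sc_sc[simp]: "sc c (sc d a) = sc (c*d) a" by (simp add: fun_eq_iff)
lemma sc_add[simp]: "sc c (a + b) = sc c a + sc c b" by (simp add: fun_eq_iff algebra_simps)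
lemma sc_zero[simp]: "sc c 0 = 0" by (simp add: fun_eq_iff)
lemma sc_minus_one: "sc (-1) a = - a" by (simp add: fun_eq_iff)

declare sc_apply[simp del]

lemma fz: "(\<lambda>w. 0::'k::comm_ring_1) = 0" by auto
lemma fadd: "(\<lambda>w. (a::'k::comm_ring_1 ncs) w + b w) = a + b" by auto
lemma fsc: "(\<lambda>w. c * (a::'k::comm_ring_1 ncs) w) = sc c a" by (simp add: sc_def)
lemmas fnorm = fz fadd fsc

inductive lin :: "'k::comm_ring_1 ncs set \<Rightarrow> 'k ncs \<Rightarrow> bool" for T where
  lin_zero: "lin T 0"
| lin_step: "t \<in> T \<Longrightarrow> lin T f \<Longrightarrow> lin T (sc c t + f)"

lemma lin_base: "t \<in> T \<Longrightarrow> lin T t"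
  using lin_step[OF _ lin_zero, of t T 1] by simp

lemma lin_add: "lin T a \<Longrightarrow> lin T b \<Longrightarrow> lin T (a + b)"
  by (induction rule: lin.induct) (simp_all add: fnorm add.assoc lin_step)

lemma lin_sc: "lin T a \<Longrightarrow> lin T (sc c a)"
  by (induction rule: lin.induct) (simp_all add: fnorm lin_zero lin_step)

lemma lin_minus: "lin T a \<Longrightarrow> lin T (- a)"
  using lin_sc[of T a "-1"] by (simp add: sc_minus_one)

lemma lin_diff: assumes "lin T a" "lin T b" shows "lin T (a - b)"
proof -
  have "lin T (a + - b)" by (rule lin_add[OF assms(1) lin_minus[OF assms(2)]])
  then show ?thesis by (simp only: diff_conv_add_uminus)
qed

lemma lin_trans: "(\<And>t. t \<in> T \<Longrightarrow> lin T' t) \<Longrightarrow> lin T f \<Longrightarrow> lin T' f"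
proof -
  assume h: "\<And>t. t \<in> T \<Longrightarrow> lin T' t"
  show "lin T f \<Longrightarrow> lin T' f"
    by (induction rule: lin.induct) (auto simp: fnorm intro: lin_zero lin_add lin_sc h)
qed

lemma lin_mono: "T \<subseteq> T' \<Longrightarrow> lin T f \<Longrightarrow> lin T' f"
  by (rule lin_trans[of T]) (auto intro: lin_base)

lemma lin_map:
  assumes z: "\<phi> 0 = 0" and ad: "\<And>a b. \<phi> (a + b) = \<phi> a + \<phi> b"
    and s: "\<And>c a. \<phi> (sc c a) = sc c (\<phi> a)" and t: "\<And>t. t \<in> T \<Longrightarrow> lin T' (\<phi> t)"
  shows "lin T f \<Longrightarrow> lin T' (\<phi> f)"
  by (induction rule: lin.induct) (auto simp: fnorm z ad s intro: lin_zero lin_add lin_sc t)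

lemma lin_bil:
  assumes "lin A a" "lin B b" "\<And>s t. s \<in> A \<Longrightarrow> t \<in> B \<Longrightarrow> lin C (lie_br s t)"
  shows "lin C (lie_br a b)"
proof -
  have H: "lin C (lie_br s b)" if "s \<in> A" for s
    by (rule lin_map[where \<phi>="lie_br s" and T=B, OF _ _ _ _ assms(2)]) (auto intro: assms(3) that)
  show ?thesis
    by (rule lin_map[where \<phi>="\<lambda>a. lie_br a b" and T=A, OF _ _ _ _ assms(1)]) (auto intro: H)
qed

definition pY :: "nat \<Rightarrow> 'k::comm_ring_1 ncs \<Rightarrow> 'k ncs" where
  "pY d f = (\<lambda>w. if cnt Y w = d then f w else 0)"

lemma pY_add[simp]: "pY d (a + b) = pY d a + pY d b" by (simp add: pY_def fun_eq_iff)
lemma pY_sc[simp]: "pY d (sc c a) = sc c (pY d a)" by (simp add: pY_def fun_eq_iff sc_apply)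
lemma pY_zero[simp]: "pY d 0 = 0" by (simp add: pY_def fun_eq_iff)
lemma pY_hom: "hom p a b \<Longrightarrow> pY d p = (if d = b then p else 0)"
  by (auto simp: pY_def fun_eq_iff dest: hom_D)

lemma pY_ncmul: "pY d (ncmul p q) w = (\<Sum>e\<le>d. ncmul (pY e p) (pY (d-e) q) w)"
proof -
  have inner: "(\<Sum>e\<le>d. (if t = e then P else 0) * (if s = d - e then Q else 0)) = (if t + s = d then P * Q else (0::'a::comm_ring_1))"
    for t s :: nat and P Q
  proof -
    have "(\<Sum>e\<le>d. (if t = e then P else 0) * (if s = d - e then Q else 0)) =
          (\<Sum>e\<le>d. if e = t then (if s = d - t then P * Q else 0) else 0)"
      by (rule sum.cong) auto
    also have "\<dots> = (if t + s = d then P * Q else 0)"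
      by (auto simp: sum.delta)
    finally show ?thesis .
  qed
  have "(\<Sum>e\<le>d. ncmul (pY e p) (pY (d-e) q) w) =
      (\<Sum>i\<le>length w. \<Sum>e\<le>d. (if cnt Y (take i w) = e then p (take i w) else 0) * (if cnt Y (drop i w) = d - e then q (drop i w) else 0))"
    unfolding ncmul_def pY_def by (rule sum.swap)
  also have "\<dots> = (\<Sum>i\<le>length w. if cnt Y (take i w) + cnt Y (drop i w) = d then p (take i w) * q (drop i w) else 0)"
    by (simp only: inner)
  also have "\<dots> = pY d (ncmul p q) w"
  proof -
    have "\<And>i. cnt Y (take i w) + cnt Y (drop i w) = cnt Y w"
      by (metis append_take_drop_id cnt_append)
    then show ?thesis by (simp add: pY_def ncmul_def)
  qed
  finally show ?thesis by simp
qed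

lemma pY_lie: "pY d (lie_br a b) w = (\<Sum>e\<le>d. lie_br (pY e a) (pY (d-e) b) w)"
proof -
  have "(\<Sum>e\<le>d. ncmul (pY e b) (pY (d-e) a) w) = (\<Sum>e\<le>d. ncmul (pY (d-e) b) (pY e a) w)"
    using sum.atLeastAtMost_rev[of "\<lambda>e. ncmul (pY e b) (pY (d-e) a) w" 0 d]
    by (simp add: atLeast0AtMost)
  moreover have "pY d (lie_br a b) w = pY d (ncmul a b) w - pY d (ncmul b a) w"
    by (simp add: pY_def lie_br_def)
  ultimately show ?thesis
    by (simp add: pY_ncmul lie_br_def sum_subtractf)
qed



definition T0 :: "'k::comm_ring_1 ncs set" where "T0 = {xel}"
definition T1 :: "'k::comm_ring_1 ncs set" where "T1 = range ys"
definition T2 :: "'k::comm_ring_1 ncs set" where "T2 = {lie_br (ys i) (ys j) |i j. True}"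
definition T3 :: "'k::comm_ring_1 ncs set" where "T3 = {lie_br (lie_br (ys i) (ys j)) (ys k) |i j k. True}"

lemma pY_lie0: "pY 0 (lie_br a b) = lie_br (pY 0 a) (pY 0 b)"
  by (rule ext) (simp add: pY_lie)
lemma pY_lie1: "pY 1 (lie_br a b) = lie_br (pY 0 a) (pY 1 b) + lie_br (pY 1 a) (pY 0 b)"
  by (rule ext) (simp add: pY_lie)
lemma pY_lie2: "pY 2 (lie_br a b) = lie_br (pY 0 a) (pY 2 b) + lie_br (pY 1 a) (pY 1 b) + lie_br (pY 2 a) (pY 0 b)"
  by (rule ext) (simp add: pY_lie numeral_2_eq_2)
lemma pY_lie3: "pY 3 (lie_br a b) = lie_br (pY 0 a) (pY 3 b) + lie_br (pY 1 a) (pY 2 b) + lie_br (pY 2 a) (pY 1 b) + lie_br (pY 3 a) (pY 0 b)"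
  by (rule ext) (simp add: pY_lie numeral_3_eq_3 numeral_2_eq_2)

lemma Rx1: "t \<in> T1 \<Longrightarrow> lin T1 (lie_br t xel)"
  by (auto simp: T1_def ys_Suc[symmetric] intro: lin_base)
lemma Rx2: "t \<in> T2 \<Longrightarrow> lin T2 (lie_br t xel)"
proof -
  assume "t \<in> T2"
  then obtain i j where t: "t = lie_br (ys i) (ys j)" by (auto simp: T2_def)
  have "lie_br t xel = lie_br (ys (Suc i)) (ys j) + lie_br (ys i) (ys (Suc j))"
    by (simp add: t jacobi[of "ys i" "ys j" xel] ys_Suc)
  then show ?thesis unfolding T2_def by (simp only:) (intro lin_add lin_base; blast)
qed
lemma Rx3: "t \<in> T3 \<Longrightarrow> lin T3 (lie_br t xel)"
proof -
  assume "t \<in> T3"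
  then obtain i j k where t: "t = lie_br (lie_br (ys i) (ys j)) (ys k)" by (auto simp: T3_def)
  have "lie_br t xel = lie_br (lie_br (ys (Suc i)) (ys j)) (ys k) + lie_br (lie_br (ys i) (ys (Suc j))) (ys k)
     + lie_br (lie_br (ys i) (ys j)) (ys (Suc k))"
    by (simp add: t jacobi[of "lie_br (ys i) (ys j)" "ys k" xel] jacobi[of "ys i" "ys j" xel] ys_Suc)
  then show ?thesis unfolding T3_def by (simp only:) (intro lin_add lin_base; blast)
qed

lemma Lx: "lin T (lie_br t xel) \<Longrightarrow> lin T (lie_br xel t)"
  by (subst lie_anti) (rule lin_minus)

lemma cl00: "s \<in> T0 \<Longrightarrow> t \<in> T0 \<Longrightarrow> lin T0 (lie_br s t)"
  by (auto simp: T0_def intro: lin_zero)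
lemma cl01: "s \<in> T0 \<Longrightarrow> t \<in> T1 \<Longrightarrow> lin T1 (lie_br s t)"
  by (auto simp: T0_def intro: Lx Rx1)
lemma cl10: "s \<in> T1 \<Longrightarrow> t \<in> T0 \<Longrightarrow> lin T1 (lie_br s t)"
  by (auto simp: T0_def intro: Rx1)
lemma cl02: "s \<in> T0 \<Longrightarrow> t \<in> T2 \<Longrightarrow> lin T2 (lie_br s t)"
  by (auto simp: T0_def intro: Lx Rx2)
lemma cl20: "s \<in> T2 \<Longrightarrow> t \<in> T0 \<Longrightarrow> lin T2 (lie_br s t)"
  by (auto simp: T0_def intro: Rx2)
lemma cl03: "s \<in> T0 \<Longrightarrow> t \<in> T3 \<Longrightarrow> lin T3 (lie_br s t)"
  by (auto simp: T0_def intro: Lx Rx3)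
lemma cl30: "s \<in> T3 \<Longrightarrow> t \<in> T0 \<Longrightarrow> lin T3 (lie_br s t)"
  by (auto simp: T0_def intro: Rx3)
lemma cl11: "s \<in> T1 \<Longrightarrow> t \<in> T1 \<Longrightarrow> lin T2 (lie_br s t)"
  by (auto simp: T1_def T2_def intro: lin_base)
lemma cl21: "s \<in> T2 \<Longrightarrow> t \<in> T1 \<Longrightarrow> lin T3 (lie_br s t)"
  by (auto simp: T1_def T2_def T3_def intro: lin_base)
lemma cl12: assumes "s \<in> T1" "t \<in> T2" shows "lin T3 (lie_br s t)"
proof -
  obtain x i j where st: "s = ys x" "t = lie_br (ys i) (ys j)" using assms by (auto simp: T1_def T2_def)
  have "lin T3 (lie_br (lie_br (ys i) (ys j)) (ys x))" by (rule lin_base) (auto simp: T3_def)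
  from lin_minus[OF this] show ?thesis by (simp add: st lie_anti[of "ys x"])
qed

lemma span3:
  "lie_gen {xel, yel} (f::'k::comm_ring_1 ncs) \<Longrightarrow>
     lin T0 (pY 0 f) \<and> lin T1 (pY 1 f) \<and> lin T2 (pY 2 f) \<and> lin T3 (pY 3 f)"
proof (induction rule: lie_gen.induct)
  case (base s)
  have x: "pY 0 xel = xel" "pY 1 xel = 0" "pY 2 xel = 0" "pY 3 xel = 0"
    by (simp_all add: pY_hom[OF hom_x])
  have y: "pY 0 yel = 0" "pY 1 yel = ys 0" "pY 2 yel = 0" "pY 3 yel = 0"
    by (simp_all add: pY_hom[OF hom_y] ys_0)
  have "ys 0 \<in> T1" by (simp add: T1_def)
  moreover have "xel \<in> T0" by (simp add: T0_def)
  ultimately show ?case using base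
    by (auto simp only: x y insert_iff empty_iff intro: lin_zero lin_base)
next
  case zero
  then show ?case by (simp add: fz lin_zero)
next
  case (add a b)
  then show ?case by (simp add: fadd lin_add)
next
  case (smult a c)
  then show ?case by (simp add: fsc lin_sc)
next
  case (br a b)
  then show ?case
  proof -
    from br.IH have a0: "lin T0 (pY 0 a)" and a1: "lin T1 (pY 1 a)" and a2: "lin T2 (pY 2 a)" and a3: "lin T3 (pY 3 a)"
      and b0: "lin T0 (pY 0 b)" and b1: "lin T1 (pY 1 b)" and b2: "lin T2 (pY 2 b)" and b3: "lin T3 (pY 3 b)"
      by auto
    show ?case
      unfolding pY_lie0 pY_lie1 pY_lie2 pY_lie3
      by (intro conjI lin_add lin_bil[OF a0 b0 cl00] lin_bil[OF a0 b1 cl01] lin_bil[OF a1 b0 cl10]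
          lin_bil[OF a0 b2 cl02] lin_bil[OF a1 b1 cl11] lin_bil[OF a2 b0 cl20]
          lin_bil[OF a0 b3 cl03] lin_bil[OF a1 b2 cl12] lin_bil[OF a2 b1 cl21] lin_bil[OF a3 b0 cl30])
  qed
qed



definition u :: "nat \<Rightarrow> nat \<Rightarrow> 'k::comm_ring_1 ncs" where
  "u m j = lie_br (lie_br (ys 0) (ys j)) (ys (m - j))"

definition S1 :: "nat \<Rightarrow> 'k::comm_ring_1 ncs set" where
  "S1 m = {lie_br (lie_br (ys i) (ys j)) (ys k) |i j k. 1 \<le> i \<and> 1 \<le> j \<and> 1 \<le> k \<and> i + j + k = m}"

definition T3m :: "nat \<Rightarrow> 'k::comm_ring_1 ncs set" where
  "T3m m = {lie_br (lie_br (ys i) (ys j)) (ys k) |i j k. i + j + k = m}"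

definition pL :: "nat \<Rightarrow> 'k::comm_ring_1 ncs \<Rightarrow> 'k ncs" where
  "pL n f = (\<lambda>w. if length w = n then f w else 0)"

lemma pL_add[simp]: "pL d (a + b) = pL d a + pL d b" by (simp add: pL_def fun_eq_iff)
lemma pL_sc[simp]: "pL d (sc c a) = sc c (pL d a)" by (simp add: pL_def fun_eq_iff sc_apply)
lemma pL_zero[simp]: "pL d 0 = 0" by (simp add: pL_def fun_eq_iff)
lemma pL_hom: "hom p a b \<Longrightarrow> pL d p = (if a + b = d then p else 0)"
  by (auto simp: pL_def fun_eq_iff dest: hom_len)

lemma hom_t3: "hom (lie_br (lie_br (ys i) (ys j)) (ys k)) (i+j+k) 3"
  using hom_lie[OF hom_lie[OF hom_ys hom_ys] hom_ys, of i j k] by (simp add: numeral_3_eq_3)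

lemma to_T3m:
  assumes "lin T3 f" "pL (m+3) f = f"
  shows "lin (T3m m) f"
proof -
  have "lin (T3m m) (pL (m+3) f)"
  proof (rule lin_map[OF _ _ _ _ assms(1)])
    fix t :: "'a ncs" assume "t \<in> T3"
    then obtain i j k where t: "t = lie_br (lie_br (ys i) (ys j)) (ys k)" by (auto simp: T3_def)
    show "lin (T3m m) (pL (m + 3) t)"
      unfolding t pL_hom[OF hom_t3] by (auto simp: T3m_def intro: lin_zero lin_base)
  qed (auto simp: fnorm)
  then show ?thesis using assms(2) by simp
qed

lemma lie_swap2: "lie_br a (lie_br b c) = lie_br (lie_br c b) a"
  by (metis lie_anti lie_minus1)
lemma lie_neg_in: "- lie_br (lie_br b c) d = lie_br (lie_br c b) d"
  by (metis lie_anti lie_minus1)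

lemma T3m_red:
  assumes "t \<in> T3m m" shows "lin (S1 m \<union> u m ` {..m}) t"
proof -
  obtain i j k where t: "t = lie_br (lie_br (ys i) (ys j)) (ys k)" and s: "i + j + k = m"
    using assms by (auto simp: T3m_def)
  show ?thesis
  proof (cases "i = 0")
    case True
    moreover have "k = m - j" using s True by simp
    ultimately have "t = u m j" by (simp add: t u_def)
    then show ?thesis using s by (auto intro: lin_base)
  next
    case i: False
    show ?thesis
    proof (cases "j = 0")
      case True
      moreover have "k = m - i" using s True by simp
      ultimately have tt: "t = - u m i" by (simp add: t u_def lie_anti[of "ys i" "ys 0"])
      have "lin (S1 m \<union> u m ` {..m}) (- u m i)" using s by (intro lin_minus lin_base) auto
      then show ?thesis unfolding tt .
    next
      case j: False
      show ?thesis
      proof (cases "k = 0")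
        case True
        have "t = lie_br (lie_br (ys i) (ys 0)) (ys j) + lie_br (ys i) (lie_br (ys j) (ys 0))"
          using True by (simp add: t jacobi[of "ys i" "ys j" "ys 0"])
        also have "\<dots> = u m j - u m i"
        proof -
          have mm: "m - j = i" "m - i = j" using s True by auto
          have h1: "lie_br (lie_br (ys i) (ys 0)) (ys j) = - u m i"
            by (simp add: u_def mm lie_anti[of "ys i" "ys 0"])
          have h2: "lie_br (ys i) (lie_br (ys j) (ys 0)) = u m j"
            by (simp add: u_def mm lie_anti[of "ys i" "lie_br (ys 0) (ys j)"] lie_anti[of "ys j" "ys 0"])
          show ?thesis unfolding h1 h2 by simp
        qed
        finally have tt: "t = u m j - u m i" .
        have "lin (S1 m \<union> u m ` {..m}) (u m j - u m i)" using s by (intro lin_diff lin_base) auto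
        then show ?thesis unfolding tt .
      next
        case False
        then have "1 \<le> i" "1 \<le> j" "1 \<le> k" using i j by auto
        then have "t \<in> S1 m" unfolding S1_def t using s by blast
        then show ?thesis by (auto intro: lin_base)
      qed
    qed
  qed
qed

lemma wel_u:
  assumes "1 \<le> k" "k \<le> m"
  shows "wel (m+3) k = u m (m-k) + u m (k-1)"
proof -
  have e1: "m + 3 - 3 - k = m - k" "m + 3 - 2 - k = m - (k - 1)" "m - (m - k) = k" using assms by auto
  have "wel (m+3) k = lie_br (ys k) (lie_br (ys (m-k)) (ys 0)) - lie_br (lie_br (ys (k-1)) (ys 0)) (ys (m - (k-1)))"
    unfolding wel_def e1 by (simp add: lnb_def ys_def fun_eq_iff)
  also have "\<dots> = u m (m-k) + u m (k-1)"
  proof -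
    have f1: "lie_br (ys k) (lie_br (ys (m-k)) (ys 0)) = lie_br (lie_br (ys 0) (ys (m-k))) (ys k)"
      by (simp add: lie_anti[of "ys k" "lie_br (ys 0) (ys (m-k))"] lie_anti[of "ys (m-k)" "ys 0"])
    have f2: "lie_br (lie_br (ys (k-1)) (ys 0)) (ys (m - (k-1))) = - lie_br (lie_br (ys 0) (ys (k-1))) (ys (m - (k-1)))"
      by (simp only: lie_anti[of "ys (k-1)" "ys 0"] lie_minus1)
    show ?thesis unfolding f1 f2 u_def e1 by simp
  qed
  finally show ?thesis .
qed



lemma delta_ys0: "delta (ys 0) = xel" by (simp add: ys_0 delta_y)
lemma delta_ysS: "1 \<le> j \<Longrightarrow> delta (ys j) = 0"
  using delta_ys[of "j - 1"] by simp
lemma x_ys: "lie_br xel (ys j) = - ys (Suc j)"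
  by (simp add: ys_Suc lie_anti[of xel])

lemma delta_u_mid:
  assumes "1 \<le> j" "j < m"
  shows "delta (u m j) = - lie_br (ys (Suc j)) (ys (m-j))"
proof -
  have "delta (ys (m - j)) = 0" using assms by (intro delta_ysS) simp
  then show ?thesis using assms
    by (simp add: u_def delta_lie delta_ys0 delta_ysS x_ys)
qed

lemma delta_u_top:
  assumes "1 \<le> m"
  shows "delta (u m m) = lie_br (ys 0) (ys (Suc m)) + lie_br (ys 0) (ys (Suc m)) + lie_br (ys (Suc 0)) (ys m)"
proof -
  have d: "delta (ys m) = 0" using assms by (rule delta_ysS)
  have "delta (u m m) = lie_br (lie_br xel (ys m)) (ys 0) + lie_br (lie_br (ys 0) (ys m)) xel"
    by (simp add: u_def delta_lie delta_ys0 d)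
  also have "lie_br (lie_br xel (ys m)) (ys 0) = lie_br (ys 0) (ys (Suc m))"
    by (simp add: x_ys lie_anti[of "ys (Suc m)" "ys 0"])
  also have "lie_br (lie_br (ys 0) (ys m)) xel = lie_br (ys (Suc 0)) (ys m) + lie_br (ys 0) (ys (Suc m))"
    by (simp add: jacobi[of "ys 0" "ys m" xel] ys_Suc[symmetric])
  finally show ?thesis by (simp only: ac_simps)
qed

lemma br_val0:
  assumes "a < c" "a < d"
  shows "lie_br (ys c) (ys d) (Y # replicate a X @ Y # v) = 0"
  using assms by (simp add: lie_br_def ys_pref0)

lemma br_val1:
  assumes "a < d"
  shows "lie_br (ys a) (ys d) (Y # replicate a X @ Y # replicate d X) = 1"
  using assms by (simp add: lie_br_def ys_pref0 ys_pref1 ys_top)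

lemma delta_sumfun:
  "delta (\<lambda>w. \<Sum>j\<in>J. \<beta> j * F j w) = (\<lambda>w. \<Sum>j\<in>J. \<beta> j * delta (F j) w)"
  unfolding delta_def by (rule ext) (simp add: sum_distrib_left sum.swap[of _ J])

definition J :: "nat \<Rightarrow> nat set" where "J m = {j. m - 1 < 2 * j \<and> j \<le> m}"

lemma finite_J: "finite (J m)"
  by (rule finite_subset[of _ "{..m}"]) (auto simp: J_def)

lemma J_pos: "j \<in> J m \<Longrightarrow> 1 \<le> j"
  by (auto simp: J_def)

lemma kernel_coeffs:
  fixes \<beta> :: "nat \<Rightarrow> 'k::field_char_0"
  assumes K: "\<And>w. (\<Sum>j\<in>J m. \<beta> j * delta (u m j) w) = 0"
  shows "\<forall>j\<in>J m. \<beta> j = 0"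
proof -
  have main: "a \<le> m \<longrightarrow> m - a \<in> J m \<longrightarrow> \<beta> (m - a) = 0" for a
  proof (induction a rule: less_induct)
    case (less a)
    show ?case
    proof (intro impI)
      assume am: "a \<le> m" and j0J: "m - a \<in> J m"
      define j0 where "j0 = m - a"
      define W where "W = Y # replicate a X @ Y # replicate (Suc j0) X"
      have j0: "j0 \<in> J m" using j0J by (simp add: j0_def)
      have ja: "m - j0 = a" using am by (simp add: j0_def)
      have two: "2 * a < m + 1" using j0 am by (auto simp: J_def j0_def)
      have others: "\<beta> j * delta (u m j) W = 0" if jJ: "j \<in> J m" and jne: "j \<noteq> j0" for j
      proof (cases "m - j < a")
        case True
        have "j \<le> m" using jJ by (auto simp: J_def)
        then have "m - (m - j) = j" by simp
        then have "\<beta> j = 0" using less.IH[OF True] True jJ \<open>j \<le> m\<close> by auto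
        then show ?thesis by simp
      next
        case False
        have "j \<le> m" using jJ by (auto simp: J_def)
        then have gt: "a < m - j" using False jne am by (simp add: j0_def)
        have j1: "1 \<le> j" using J_pos[OF jJ] .
        have jm: "j < m" using gt by simp
        have "a < Suc j" using gt jJ by (auto simp: J_def)
        then have "delta (u m j :: 'k ncs) W = 0"
          unfolding delta_u_mid[OF j1 jm] W_def using gt by (simp add: br_val0)
        then show ?thesis by simp
      qed
      have val: "delta (u m j0 :: 'k ncs) W \<noteq> 0"
      proof (cases "a = 0")
        case True
        then have j0m: "j0 = m" and m1: "1 \<le> m" using j0 J_pos[OF j0] by (auto simp: j0_def)
        have v1: "lie_br (ys 0) (ys (Suc m)) W = (1::'k)"
          unfolding W_def True j0m by (rule br_val1) simp
        have v2: "lie_br (ys (Suc 0)) (ys m) W = (0::'k)"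
          unfolding W_def by (rule br_val0) (use True m1 in auto)
        have "delta (u m j0 :: 'k ncs) W = 1 + 1 + 0"
          unfolding j0m delta_u_top[OF m1] plus_fun_apply v1 v2 ..
        then show ?thesis by simp
      next
        case False
        have j1: "1 \<le> j0" using J_pos[OF j0] .
        have jm: "j0 < m" using False am by (simp add: j0_def)
        have ad: "a < Suc j0" using two am by (simp add: j0_def)
        have "delta (u m j0 :: 'k ncs) W = lie_br (ys a) (ys (Suc j0)) W"
          unfolding delta_u_mid[OF j1 jm] ja by (simp add: lie_anti[of "ys (Suc j0)" "ys a"])
        also have "\<dots> = 1" unfolding W_def by (rule br_val1[OF ad])
        finally show ?thesis by simp
      qed
      have "(\<Sum>j\<in>J m. \<beta> j * delta (u m j) W) = \<beta> j0 * delta (u m j0) W + (\<Sum>j\<in>J m - {j0}. \<beta> j * delta (u m j) W)"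
        using finite_J j0 by (rule sum.remove)
      also have "(\<Sum>j\<in>J m - {j0}. \<beta> j * delta (u m j) W) = 0"
        using others by (intro sum.neutral) blast
      finally have "\<beta> j0 * delta (u m j0) W = 0" using K[of W] by simp
      then show "\<beta> (m - a) = 0" using val by (simp add: j0_def)
    qed
  qed
  show ?thesis
  proof
    fix j assume "j \<in> J m"
    then have "j \<le> m" by (auto simp: J_def)
    then show "\<beta> j = 0" using main[of "m - j"] \<open>j \<in> J m\<close> by simp
  qed
qed



lemma lin_split: "lin (A \<union> B) f \<Longrightarrow> \<exists>g h. f = g + h \<and> lin A g \<and> lin B h"
proof (induction rule: lin.induct)
  case lin_zero
  show ?case using lin.lin_zero[of A] lin.lin_zero[of B] by (metis add.right_neutral)
next
  case (lin_step t f c)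
  then obtain g h where gh: "f = g + h" "lin A g" "lin B h" by blast
  show ?case
  proof (cases "t \<in> A")
    case True
    have "sc c t + f = (sc c t + g) + h" by (simp add: gh add.assoc)
    moreover have "lin A (sc c t + g)" by (rule lin.lin_step[OF True gh(2)])
    ultimately show ?thesis using gh(3) by blast
  next
    case False
    then have "t \<in> B" using lin_step by blast
    have "sc c t + f = g + (sc c t + h)" by (simp add: gh add.left_commute)
    moreover have "lin B (sc c t + h)" by (rule lin.lin_step[OF \<open>t \<in> B\<close> gh(3)])
    ultimately show ?thesis using gh(2) by blast
  qed
qed

lemma lin_img:
  fixes F :: "nat \<Rightarrow> 'k::comm_ring_1 ncs"
  assumes fin: "finite I"
  shows "lin (F ` I) h \<Longrightarrow> \<exists>\<beta>. h = (\<lambda>w. \<Sum>j\<in>I. \<beta> j * F j w)"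
proof (induction rule: lin.induct)
  case lin_zero
  then show ?case by (intro exI[of _ "\<lambda>_. 0"]) auto
next
  case (lin_step t f c)
  then obtain \<beta> where b: "f = (\<lambda>w. \<Sum>j\<in>I. \<beta> j * F j w)" by blast
  obtain j0 where j0: "j0 \<in> I" "t = F j0" using lin_step by blast
  show ?case
  proof (intro exI[of _ "\<lambda>j. \<beta> j + (if j = j0 then c else 0)"] ext)
    fix w
    have "(\<Sum>j\<in>I. (\<beta> j + (if j = j0 then c else 0)) * F j w) =
        (\<Sum>j\<in>I. \<beta> j * F j w) + (\<Sum>j\<in>I. if j = j0 then c * F j w else 0)"
      by (simp add: distrib_right sum.distrib if_distrib[of "\<lambda>x. x * _"] cong: if_cong)
    also have "(\<Sum>j\<in>I. if j = j0 then c * F j w else 0) = c * F j0 w"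
      using j0 fin by (simp add: sum.delta)
    finally show "(sc c t + f) w = (\<Sum>j\<in>I. (\<beta> j + (if j = j0 then c else 0)) * F j w)"
      by (simp add: b j0 sc_apply)
  qed
qed

definition Wn :: "nat \<Rightarrow> 'k::comm_ring_1 ncs set" where
  "Wn n = {wel n k | k. int n - 2 \<le> 2 * int k \<and> k + 4 \<le> n}"

lemma u_zero: "u m 0 = 0" by (simp add: u_def)

lemma u_red:
  assumes "j \<le> m"
  shows "lin (S1 m \<union> Wn (m+3) \<union> u m ` J m) (u m j :: 'k::field_char_0 ncs)"
proof (cases "j = 0 \<or> j \<in> J m")
  case True
  then show ?thesis by (auto simp: u_zero intro: lin_zero lin_base)
next
  case False
  then have j1: "1 \<le> j" and jJ: "\<not> (m - 1 < 2 * j)" using assms by (auto simp: J_def)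
  define k where "k = m - j"
  have k1: "1 \<le> k" "k \<le> m" using j1 jJ assms by (auto simp: k_def)
  have wu: "wel (m+3) k = u m j + u m (m - 1 - j)"
    unfolding wel_u[OF k1] by (simp add: k_def assms diff_diff_add)
  have wW: "wel (m+3) k \<in> Wn (m+3)"
    unfolding Wn_def using j1 jJ assms by (auto simp: k_def)
  show ?thesis
  proof (cases "2 * j < m - 1")
    case True
    then have "m - 1 - j \<in> J m" by (auto simp: J_def)
    then have "lin (S1 m \<union> Wn (m+3) \<union> u m ` J m) (wel (m+3) k - u m (m - 1 - j))"
      using wW by (intro lin_diff lin_base) auto
    then show ?thesis by (simp add: wu)
  next
    case False
    then have "m - 1 - j = j" using jJ by simp
    then have "u m j = sc (1/2) (wel (m+3) k :: 'k ncs)"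
      by (simp add: wu fun_eq_iff sc_apply)
    moreover have "lin (S1 m \<union> Wn (m+3) \<union> u m ` J m) (sc (1/2) (wel (m+3) k))"
      using wW by (intro lin_sc lin_base) auto
    ultimately show ?thesis by simp
  qed
qed

lemma lin_ker: "(\<And>t. t \<in> T \<Longrightarrow> delta t = 0) \<Longrightarrow> lin T g \<Longrightarrow> delta g = 0"
proof -
  assume h: "\<And>t. t \<in> T \<Longrightarrow> delta t = 0"
  show "lin T g \<Longrightarrow> delta g = 0"
    by (induction rule: lin.induct) (simp_all add: h fnorm)
qed

lemma delta_wel:
  assumes "int n - 2 \<le> 2 * int k" "k + 4 \<le> n"
  shows "delta (wel n k :: 'k::comm_ring_1 ncs) = 0"
proof -
  define m where "m = n - 3"
  have n: "n = m + 3" using assms by (simp add: m_def)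
  have k: "1 \<le> k" "k \<le> m" "2 \<le> k" "k < m" using assms by (auto simp: m_def)
  have e: "Suc m - k = Suc (m - k)" "m - (k - 1) = Suc (m - k)" "Suc (k - 1) = k" "m - (m - k) = k" using k by auto
  have "delta (wel n k :: 'k ncs) = delta (u m (m-k)) + delta (u m (k-1))"
    unfolding n wel_u[OF k(1,2)] by simp
  also have "\<dots> = - lie_br (ys (Suc (m-k))) (ys k) + - lie_br (ys k) (ys (Suc (m - k)))"
    using k by (subst delta_u_mid, simp_all, subst delta_u_mid, simp_all add: e)
  also have "\<dots> = 0" by (simp add: lie_anti[of "ys k" "ys (Suc (m - k))"])
  finally show ?thesis .
qed

lemma delta_S1: "t \<in> S1 m \<Longrightarrow> delta t = 0"
  by (auto simp: S1_def delta_lie delta_ysS)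

lemma lin_lie_gen: "(\<And>t. t \<in> T \<Longrightarrow> lie_gen S t) \<Longrightarrow> lin T g \<Longrightarrow> lie_gen S g"
proof -
  assume h: "\<And>t. t \<in> T \<Longrightarrow> lie_gen S t"
  show "lin T g \<Longrightarrow> lie_gen S g"
  proof (induction rule: lin.induct)
    case lin_zero
    then show ?case using lie_gen.zero[of S] by (simp add: fz)
  next
    case (lin_step t f c)
    have "lie_gen S (\<lambda>w. (\<lambda>w. c * t w) w + f w)"
      by (rule lie_gen.add[OF lie_gen.smult[OF h[OF lin_step(1)]] lin_step(3)])
    moreover have "(\<lambda>w. (\<lambda>w. c * t w) w + f w) = sc c t + f" by (simp add: fun_eq_iff sc_apply)
    ultimately show ?case by (simp only: fadd)
  qed
qed

lemma ys_gen: "1 \<le> i \<Longrightarrow> lie_gen (gens_cor n) (ys i :: 'k::comm_ring_1 ncs)"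
proof (induction i)
  case 0 then show ?case by simp
next
  case (Suc i)
  have x: "lie_gen (gens_cor n) xel" by (rule lie_gen.base) (simp add: gens_cor_def)
  show ?case
  proof (cases i)
    case 0
    then show ?thesis by (auto simp: ys_Suc ys_0 gens_cor_def intro: lie_gen.base)
  next
    case (Suc i')
    have "lie_gen (gens_cor n) (ys i :: 'k ncs)" using Suc.IH Suc by simp
    then show ?thesis unfolding ys_Suc[of i] by (rule lie_gen.br[OF _ x])
  qed
qed

theorem main_fwd:
  fixes f :: "'k::field_char_0 ncs" and n :: nat
  assumes "f \<in> free_lie"
    and "f \<noteq> (\<lambda>w. 0)"
    and "deg_y_is f 3"
    and "deg_is f n"
    and "delta f = (\<lambda>w. 0)"
  shows "lie_gen (gens_cor n) f"
proof -
  have lg: "lie_gen {xel, yel} f" using assms(1) by (simp add: free_lie_def)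
  have p3: "pY 3 f = f" using assms(3) by (auto simp: pY_def deg_y_is_def fun_eq_iff)
  have T3: "lin T3 f" using span3[OF lg] p3 by simp
  obtain w0 where w0: "f w0 \<noteq> 0" using assms(2) by auto
  have "length w0 = n" "cnt Y w0 = 3" using w0 assms(3,4) by (auto simp: deg_y_is_def deg_is_def)
  then have n3: "3 \<le> n" using length_cnt[of w0] by simp
  define m where "m = n - 3"
  have n: "n = m + 3" using n3 by (simp add: m_def)
  have pL: "pL (m+3) f = f" using assms(4) n by (auto simp: pL_def deg_is_def fun_eq_iff)
  have "lin (T3m m) f" by (rule to_T3m[OF T3 pL])
  moreover have "\<And>t::'k ncs. t \<in> T3m m \<Longrightarrow> lin (S1 m \<union> u m ` {..m}) t" by (rule T3m_red)
  ultimately have "lin (S1 m \<union> u m ` {..m}) f" using lin_trans by blast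
  moreover have "\<And>t::'k ncs. t \<in> S1 m \<union> u m ` {..m} \<Longrightarrow> lin ((S1 m \<union> Wn (m+3)) \<union> u m ` J m) t"
    by (auto intro: lin_base u_red)
  ultimately have "lin ((S1 m \<union> Wn (m+3)) \<union> u m ` J m) f" using lin_trans by blast
  then obtain g h where gh: "f = g + h" "lin (S1 m \<union> Wn (m+3)) g" "lin (u m ` J m) h"
    using lin_split by blast
  obtain \<beta> where b: "h = (\<lambda>w. \<Sum>j\<in>J m. \<beta> j * u m j w)" using lin_img[OF finite_J gh(3)] by blast
  have dg: "delta g = 0"
    by (rule lin_ker[OF _ gh(2)]) (auto simp: Wn_def delta_S1 delta_wel)
  have "delta h = 0" using assms(5) gh(1) dg by (simp add: fz)
  then have "\<And>w. (\<Sum>j\<in>J m. \<beta> j * delta (u m j) w) = 0"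
    unfolding b delta_sumfun by (metis zero_fun_apply)
  then have "\<forall>j\<in>J m. \<beta> j = 0" by (rule kernel_coeffs)
  then have "h = 0" unfolding b by (auto simp: fun_eq_iff)
  then have fg: "f = g" using gh(1) by simp
  show ?thesis unfolding fg
  proof (rule lin_lie_gen[OF _ gh(2)])
    fix t assume "t \<in> S1 m \<union> Wn (m+3)"
    then show "lie_gen (gens_cor n) t"
    proof
      assume "t \<in> S1 m"
      then obtain i j k where t: "t = lie_br (lie_br (ys i) (ys j)) (ys k)" "1 \<le> i" "1 \<le> j" "1 \<le> k"
        by (auto simp: S1_def)
      show ?thesis unfolding t(1) by (intro lie_gen.br ys_gen t(2-4))
    next
      assume "t \<in> Wn (m+3)"
      then show ?thesis by (intro lie_gen.base) (auto simp: Wn_def gens_cor_def n)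
    qed
  qed
qed

theorem main_bwd:
  fixes f :: "'k::comm_ring_1 ncs"
  shows "lie_gen (gens_cor n) f \<Longrightarrow> delta f = (\<lambda>w. 0)"
proof (induction rule: lie_gen.induct)
  case (base s)
  then show ?case
  proof (auto simp: gens_cor_def fz)
    show "delta xel = 0" by (rule delta_x)
    show "delta (lie_br yel xel) = 0" by (simp add: delta_lie delta_x delta_y)
    fix k assume "int n - 2 \<le> 2 * int k" "k + 4 \<le> n"
    then show "delta (wel n k) = 0" by (rule delta_wel)
  qed
next
  case zero
  then show ?case by (simp add: fz)
next
  case (add a b)
  then show ?case by (simp add: fz fadd)
next
  case (smult a c)
  then show ?case by (simp add: fz fsc)
next
  case (br a b)
  then show ?case by (simp add: fz delta_lie)
qed


theorem corollary5p6:
  fixes f :: "'k::field_char_0 ncs" and n :: nat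
  assumes "f \<in> free_lie"
    and "f \<noteq> (\<lambda>w. 0)"
    and "multihom f"
    and "deg_y_is f 3"
    and "deg_is f n"
  shows "delta f = (\<lambda>w. 0) \<longleftrightarrow> lie_gen (gens_cor n) f"
  using main_fwd[OF assms(1,2,4,5)] main_bwd by blast

end
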